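(* Let $d>0$ be fixed. For every integer $N>d$ put $p=d/N$ and let $D_N(i,j)$, $S_N(i,j)$ ($1\le i,j\le N$) be the mean-field node-based quantities defined in the context. Let $\tilde{\mathcal D}_N:[0,1)^2\to\mathbb R$ be the scaled function defined in the context. Then, as $N\to\infty$, $\tilde{\mathcal D}_N$ converges uniformly on $[0,1)^2$ to $$\mathcal D_\infty(\alpha,\beta)=\frac{d\,e^{d|\beta-\alpha|}}{\bigl(1-e^{-d\min(\alpha,\beta)}+e^{d|\beta-\alpha|}\bigr)^2}.$$ Equivalently, $\mathcal D_\infty(\alpha,\beta)=\dfrac{d\,e^{d(\beta-\alpha)}}{(1-e^{-d\alpha}+e^{d(\beta-\alpha)})^2}$ for all $(\alpha,\beta)$; this expression is symmetric in $(\alpha,\beta)$.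
   Context: Mean-field node-based recursion: fix $N$ and $p\in(0,1]$. For $i,j\in\{1,\dots,N\}$ define $D_N(i,j)$ and $S_N(i,j)$ jointly by $S_N(i,j)=1-\sum_{k=1}^{j-1}D_N(i,k)$, $D_N(i,i)=0$, and $D_N(i,j)=p\,S_N(i,j)\,S_N(j,i)$ for $i\ne j$. (This is well defined by induction on $i+j$, since $S_N(i,j)$ only involves $D_N(i,k)$ with $k<j$.) For $\alpha\in[0,1)$ write $i_N(\alpha)=\lfloor N\alpha\rfloor+1\in\{1,\dots,N\}$. The scaled function is $\tilde{\mathcal D}_N(\alpha,\beta)=N\,D_N(i_N(\alpha),i_N(\beta))$ if $\lfloor N\alpha\rfloor\neq\lfloor N\beta\rfloor$, and $\tilde{\mathcal D}_N(\alpha,\beta)=N p\,S_N(i_N(\alpha),i_N(\alpha))^2$ otherwise. Here $p=d/N$. *)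

theory Defs
  imports "HOL-Analysis.Analysis"
begin

text \<open>Mean-field node-based recursion (indices are natural numbers, meaningful for 1..N).  We define D and S by mutual recursion
  on i + j (D at (i,j) calls S at (i,j) and (j,i); S at (i,j) calls D at (i,k), k < j).\<close>

function D_mf :: "real \<Rightarrow> nat \<Rightarrow> nat \<Rightarrow> real"
  and S_mf :: "real \<Rightarrow> nat \<Rightarrow> nat \<Rightarrow> real" where
  "D_mf p i j = (if i = j then 0 else p * S_mf p i j * S_mf p j i)"
| "S_mf p i j = 1 - (\<Sum>k\<in>{1..<j}. D_mf p i k)"
  by pat_completeness auto
termination
  by (relation "Wellfounded.measure (\<lambda>x. case x of Inl (p, i, j) \<Rightarrow> 2 * (i + j) + (1::nat)
                                    | Inr (p, i, j) \<Rightarrow> 2 * (i + j))") auto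

definition idxN :: "nat \<Rightarrow> real \<Rightarrow> nat" where
  "idxN N \<alpha> = nat \<lfloor>real N * \<alpha>\<rfloor> + 1"

definition Dscaled :: "real \<Rightarrow> nat \<Rightarrow> real \<Rightarrow> real \<Rightarrow> real" where
  "Dscaled d N \<alpha> \<beta> =
     (let p = d / real N in
      if \<lfloor>real N * \<alpha>\<rfloor> \<noteq> \<lfloor>real N * \<beta>\<rfloor>
      then real N * D_mf p (idxN N \<alpha>) (idxN N \<beta>)
      else real N * p * (S_mf p (idxN N \<alpha>) (idxN N \<alpha>))^2)"

definition Dinf :: "real \<Rightarrow> real \<Rightarrow> real \<Rightarrow> real" where
  "Dinf d \<alpha> \<beta> = d * exp (d * \<bar>\<beta> - \<alpha>\<bar>) /
      (1 - exp (- d * min \<alpha> \<beta>) + exp (d * \<bar>\<beta> - \<alpha>\<bar>))^2"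

end

theory Submission
  imports Defs
begin


declare S_mf.simps[simp del] D_mf.simps[simp del]

lemma S_zero: "S_mf p i 0 = 1"
  by (subst S_mf.simps) simp

lemma S_Suc: "S_mf p i (Suc j) = S_mf p i j - (if j = 0 then 0 else D_mf p i j)"
proof (cases "j = 0")
  case True
  then show ?thesis by (subst S_mf.simps) (simp add: S_zero)
next
  case False
  have "{1..<Suc j} = insert j {1..<j}" using False by auto
  then have "S_mf p i (Suc j) = 1 - (D_mf p i j + (\<Sum>k\<in>{1..<j}. D_mf p i k))"
    by (subst S_mf.simps) simp
  also have "\<dots> = S_mf p i j - D_mf p i j"
    by (simp add: S_mf.simps[of p i j])
  finally show ?thesis using False by simp
qed

lemma S_one: "S_mf p i (Suc 0) = 1"
  by (simp add: S_Suc S_zero)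

lemma S_step: "j \<noteq> 0 \<Longrightarrow> j \<noteq> i \<Longrightarrow> S_mf p i (Suc j) = S_mf p i j * (1 - p * S_mf p j i)"
  by (simp add: S_Suc algebra_simps D_mf.simps)

lemma S_diag: "S_mf p i (Suc i) = S_mf p i i"
  by (simp add: S_Suc D_mf.simps)

lemma S_bounds_aux: "0 \<le> p \<Longrightarrow> p \<le> 1 \<Longrightarrow> i + j = n \<Longrightarrow> 0 \<le> S_mf p i j \<and> S_mf p i j \<le> 1"
proof (induction n arbitrary: i j rule: less_induct)
  case (less n)
  show ?case
  proof (cases j)
    case 0 then show ?thesis by (simp add: S_zero)
  next
    case (Suc j0)
    show ?thesis
    proof (cases "j0 = 0 \<or> j0 = i")
      case True
      then show ?thesis
      proof
        assume "j0 = 0" then show ?thesis using Suc by (simp add: S_one)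
      next
        assume h: "j0 = i"
        have "0 \<le> S_mf p i j0 \<and> S_mf p i j0 \<le> 1" using less Suc by auto
        then show ?thesis using Suc h by (simp add: S_diag)
      qed
    next
      case False
      have a: "0 \<le> S_mf p i j0 \<and> S_mf p i j0 \<le> 1" using less Suc by auto
      have b: "0 \<le> S_mf p j0 i \<and> S_mf p j0 i \<le> 1" using less.IH[of "j0 + i" j0 i] less.prems Suc by auto
      have e: "S_mf p i j = S_mf p i j0 * (1 - p * S_mf p j0 i)" using False Suc S_step by auto
      have c: "0 \<le> 1 - p * S_mf p j0 i" "1 - p * S_mf p j0 i \<le> 1"
        using b less.prems by (auto simp: mult_le_one)
      show ?thesis unfolding e using a c by (auto simp: mult_le_one)
    qed
  qed
qed

lemma S_bounds: "0 \<le> p \<Longrightarrow> p \<le> 1 \<Longrightarrow> 0 \<le> S_mf p i j \<and> S_mf p i j \<le> 1"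
  using S_bounds_aux by blast



lemma G1_aux:
  fixes A B p u w :: real
  assumes "u > 0" "w > 0" "w = u + p*B"
  shows "A/u*(1 - p*(B/u)) - A/w = - (A*p^2*B^2/(u^2*w))"
proof -
  have "A/u*(1 - p*(B/u)) - A/w = A*(w*(u - p*B) - u^2)/(u^2*w)"
    using assms(1,2) by (simp add: field_simps power2_eq_square)
  also have "w*(u - p*B) - u^2 = - (p^2*B^2)" using assms(3) by (simp add: algebra_simps power2_eq_square)
  finally show ?thesis by simp
qed

lemma G1_eq:
  fixes A B p :: real
  assumes "A \<ge> 1" "B \<ge> 1" "p \<ge> 0"
  shows "A/(A+B-1)*(1 - p*(B/(A+B-1))) - A/(A+(1+p)*B-1) = - (A*p^2*B^2/((A+B-1)^2*(A+(1+p)*B-1)))"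
proof -
  have "(1+p)*B \<ge> 1*B" using assms by (intro mult_right_mono) auto
  then have "A+B-1 > 0" "A+(1+p)*B-1 > 0" using assms by linarith+
  moreover have "A+(1+p)*B-1 = (A+B-1) + p*B" by (simp add: algebra_simps)
  ultimately show ?thesis by (rule G1_aux)
qed

lemma G1_bound:
  fixes A B p :: real
  assumes "A \<ge> 1" "B \<ge> 1" "p \<ge> 0"
  shows "0 \<le> A*p^2*B^2/((A+B-1)^2*(A+(1+p)*B-1)) \<and> A*p^2*B^2/((A+B-1)^2*(A+(1+p)*B-1)) \<le> p^2"
proof -
  have pb: "p*B \<ge> 0" "B*p \<ge> 0" using assms by simp_all
  have "(1+p)*B \<ge> 1*B" using assms by (intro mult_right_mono) auto
  then have d1: "A+B-1 \<ge> B" "A + (1+p)*B - 1 \<ge> A" using assms by linarith+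
  have "B^2 \<le> (A+B-1)^2" using d1 assms by (intro power_mono) auto
  then have "A*B^2 \<le> (A+(1+p)*B-1)*(A+B-1)^2" using d1 assms by (intro mult_mono) auto
  then have "p^2*(A*B^2) \<le> p^2*((A+(1+p)*B-1)*(A+B-1)^2)" by (intro mult_left_mono) auto
  then have num: "A*p^2*B^2 \<le> p^2*((A+B-1)^2*(A+(1+p)*B-1))" by (simp add: mult_ac)
  have den: "(A+B-1)^2*(A+(1+p)*B-1) > 0" using d1 assms by auto
  show ?thesis using num den assms by (simp add: pos_divide_le_eq)
qed

lemma G_local:
  fixes A B p Y :: real
  assumes "A \<ge> 1" "B \<ge> 1" "p \<ge> 0" "\<bar>Y - B/(A+B-1)\<bar> \<le> p"
  shows "\<bar>A/(A+(1+p)*B-1) - A/(A+B-1)*(1-p*Y)\<bar> \<le> 2*p^2"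
proof -
  have e: "A/(A+B-1)*(1 - p*(B/(A+B-1))) - A/(A+(1+p)*B-1) = - (A*p^2*B^2/((A+B-1)^2*(A+(1+p)*B-1)))"
    using G1_eq assms by blast
  have b1: "\<bar>A/(A+B-1)*(1 - p*(B/(A+B-1))) - A/(A+(1+p)*B-1)\<bar> \<le> p^2"
    unfolding e abs_le_iff using G1_bound[OF assms(1-3)] by linarith
  have h0: "0 \<le> A/(A+B-1)" "A/(A+B-1) \<le> 1" using assms by auto
  have "\<bar>A/(A+B-1)*(1-p*Y) - A/(A+B-1)*(1 - p*(B/(A+B-1)))\<bar> = A/(A+B-1) * (p * \<bar>Y - B/(A+B-1)\<bar>)"
  proof -
    have "A/(A+B-1)*(1-p*Y) - A/(A+B-1)*(1 - p*(B/(A+B-1))) = A/(A+B-1)*((1-p*Y) - (1 - p*(B/(A+B-1))))"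
      by (rule right_diff_distrib[symmetric])
    also have "(1-p*Y) - (1 - p*(B/(A+B-1))) = p * (B/(A+B-1) - Y)" by (simp add: algebra_simps)
    finally show ?thesis using h0 assms by (simp add: abs_mult abs_minus_commute)
  qed
  also have "\<dots> \<le> 1 * (p * p)" using h0 assms by (intro mult_mono) auto
  finally have b2: "\<bar>A/(A+B-1)*(1-p*Y) - A/(A+B-1)*(1 - p*(B/(A+B-1)))\<bar> \<le> p^2" by (simp add: power2_eq_square)
  show ?thesis using b1 b2 unfolding abs_le_iff by linarith
qed

lemma G2:
  fixes A B p :: real
  assumes "A \<ge> 1" "B \<ge> 1" "p \<ge> 0"
  shows "\<bar>B/(B+A-1) - B/(B+(1+p)*A-1)\<bar> \<le> p"
proof -
  have pa: "p*A \<ge> 0" "A*p \<ge> 0" using assms by simp_all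
  have "(1+p)*A \<ge> 1*A" using assms by (intro mult_right_mono) auto
  then have d: "B+A-1 \<ge> A" "B+(1+p)*A-1 \<ge> B" "B+A-1 > 0" "B+(1+p)*A-1 > 0" using assms by linarith+
  have eq: "B/(B+A-1) - B/(B+(1+p)*A-1) = p * (A/(B+A-1)) * (B/(B+(1+p)*A-1))"
    using d by (simp add: field_simps)
  have "A/(B+A-1) \<le> 1" "B/(B+(1+p)*A-1) \<le> 1" using d by auto
  moreover have "A/(B+A-1) \<ge> 0" "B/(B+(1+p)*A-1) \<ge> 0" using d assms by auto
  ultimately have "p * (A/(B+A-1)) * (B/(B+(1+p)*A-1)) \<le> p * 1 * 1" using assms
    by (intro mult_mono) auto
  then show ?thesis unfolding eq using assms d by (simp add: abs_mult)
qed

lemma G3: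
  fixes A B p :: real
  assumes "A \<ge> 1" "B \<ge> 1" "p \<ge> 0"
  shows "\<bar>(1+p)*B/((1+p)*B+A-1) - B/(A+B-1)\<bar> \<le> p"
proof -
  have pb: "p*B \<ge> 0" "B*p \<ge> 0" using assms by simp_all
  have "(1+p)*B \<ge> 1*B" using assms by (intro mult_right_mono) auto
  then have d: "A+B-1 \<ge> B" "(1+p)*B+A-1 \<ge> A - 1" "A+B-1 > 0" "(1+p)*B+A-1 > 0" "(1+p)*B+A-1 \<ge> B" using assms by linarith+
  have eq: "(1+p)*B/((1+p)*B+A-1) - B/(A+B-1) = p * ((A-1)/(A+B-1)) * (B/((1+p)*B+A-1))"
    using d by (simp add: field_simps)
  have "(A-1)/(A+B-1) \<le> 1" "B/((1+p)*B+A-1) \<le> 1" using d assms by auto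
  moreover have "(A-1)/(A+B-1) \<ge> 0" "B/((1+p)*B+A-1) \<ge> 0" using d assms by auto
  ultimately have "p * ((A-1)/(A+B-1)) * (B/((1+p)*B+A-1)) \<le> p * 1 * 1" using assms
    by (intro mult_mono) auto
  moreover have "p * ((A-1)/(A+B-1)) * (B/((1+p)*B+A-1)) \<ge> 0" using calculation assms d by auto
  ultimately show ?thesis unfolding eq abs_le_iff by linarith
qed



definition hh :: "real \<Rightarrow> real \<Rightarrow> real" where "hh a c = a/(a+c-1)"
definition ex :: "nat \<Rightarrow> nat \<Rightarrow> nat" where "ex i j = (if j \<le> i then j - 1 else j - 2)"
definition XX :: "real \<Rightarrow> nat \<Rightarrow> nat \<Rightarrow> real" where
  "XX p i j = hh ((1+p)^(i-1)) ((1+p)^(ex i j))"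

lemma hh_bounds: "a \<ge> 1 \<Longrightarrow> c \<ge> 1 \<Longrightarrow> 0 \<le> hh a c \<and> hh a c \<le> 1"
  unfolding hh_def by auto

lemma XX_bounds: "0 \<le> p \<Longrightarrow> 0 \<le> XX p i j \<and> XX p i j \<le> 1"
  unfolding XX_def by (intro hh_bounds one_le_power) auto

lemma X_local:
  fixes p :: real
  assumes p: "0 \<le> p" and ij: "i \<ge> 1" "j \<ge> 1" "j \<noteq> i"
  shows "\<bar>XX p i (Suc j) - XX p i j * (1 - p * XX p j i)\<bar> \<le> 2*p^2"
proof (cases "j < i")
  case True
  define A where "A = (1+p)^(i-1)"
  define B where "B = (1+p)^(j-1)"
  define A' where "A' = (1+p)^(i-2)"
  have A1: "A \<ge> 1" "B \<ge> 1" "A' \<ge> 1" unfolding A_def B_def A'_def using p by (auto intro: one_le_power)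
  have i2: "i - 1 = Suc (i - 2)" using True ij by arith
  have AA: "A = (1+p)*A'" unfolding A_def A'_def i2 by simp
  have j2: "j = Suc (j - 1)" using ij by arith
  have qB: "(1+p)^j = (1+p)*B" unfolding B_def by (subst j2) simp
  have "ex i (Suc j) = j" "ex i j = j - 1" "ex j i = i - 2" using True by (auto simp: ex_def)
  then have x1: "XX p i (Suc j) = A/(A+(1+p)*B-1)" and x2: "XX p i j = A/(A+B-1)"
    and x3: "XX p j i = B/(B+A'-1)"
    unfolding XX_def hh_def A_def B_def A'_def by (simp_all add: qB[unfolded B_def])
  have "\<bar>B/(B+A'-1) - B/(B+(1+p)*A'-1)\<bar> \<le> p" using G2 A1 p by blast
  then have "\<bar>XX p j i - B/(A+B-1)\<bar> \<le> p" unfolding x3 AA by (simp add: add_ac)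
  then show ?thesis unfolding x1 x2 using G_local A1 p by blast
next
  case False
  then have ji: "i < j" using ij by auto
  define A where "A = (1+p)^(i-1)"
  define B where "B = (1+p)^(j-2)"
  have A1: "A \<ge> 1" "B \<ge> 1" unfolding A_def B_def using p by (auto intro: one_le_power)
  have j2: "j - 1 = Suc (j - 2)" using ji ij by arith
  have qB: "(1+p)^(j-1) = (1+p)*B" unfolding B_def j2 by simp
  have "ex i (Suc j) = j - 1" "ex i j = j - 2" "ex j i = i - 1" using ji by (auto simp: ex_def)
  then have x1: "XX p i (Suc j) = A/(A+(1+p)*B-1)" and x2: "XX p i j = A/(A+B-1)"
    and x3: "XX p j i = (1+p)*B/((1+p)*B+A-1)"
    unfolding XX_def hh_def A_def B_def using qB[unfolded B_def, simplified] by simp_all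
  have "\<bar>XX p j i - B/(A+B-1)\<bar> \<le> p" unfolding x3 using G3 A1 p by blast
  then show ?thesis unfolding x1 x2 using G_local A1 p by blast
qed

lemma err_aux:
  fixes p :: real
  assumes p: "0 \<le> p" "p \<le> 1"
  shows "i + j = n \<Longrightarrow> i \<ge> 1 \<Longrightarrow> j \<ge> 1 \<Longrightarrow> \<bar>S_mf p i j - XX p i j\<bar> \<le> 2*p*((1+p)^(i+j) - 1)"
proof (induction n arbitrary: i j rule: less_induct)
  case (less n)
  have q1: "\<And>k. (1+p)^k \<ge> 1" using p by (auto intro: one_le_power)
  obtain j0 where j: "j = Suc j0" using less.prems by (cases j) auto
  show ?case
  proof (cases "j0 = 0")
    case True
    have "XX p i j = 1" using j True less.prems q1[of "i-1"] p unfolding XX_def ex_def hh_def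
      by simp
    moreover have "S_mf p i j = 1" using j True by (simp add: S_one)
    moreover have "2*p*((1+p)^(i+j) - 1) \<ge> 0" using q1 p by simp
    ultimately show ?thesis by simp
  next
    case j00: False
    show ?thesis
    proof (cases "j0 = i")
      case True
      have "S_mf p i j = S_mf p i j0" using j True by (simp add: S_diag)
      moreover have "XX p i j = XX p i j0" using j True unfolding XX_def ex_def by simp
      moreover have "\<bar>S_mf p i j0 - XX p i j0\<bar> \<le> 2*p*((1+p)^(i+j0) - 1)"
        using less.IH[of "i+j0" i j0] less.prems j j00 by auto
      moreover have "(1+p)^(i+j0) \<le> (1+p)^(i+j)" using j p by (intro power_increasing) auto
      moreover have "2*p*((1+p)^(i+j0) - 1) \<le> 2*p*((1+p)^(i+j) - 1)"
        using calculation(4) p by (intro mult_left_mono) auto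
      ultimately show ?thesis by linarith
    next
      case False
      define S1 where "S1 = S_mf p i j0"
      define S2 where "S2 = S_mf p j0 i"
      define X1 where "X1 = XX p i j0"
      define X2 where "X2 = XX p j0 i"
      define X3 where "X3 = XX p i j"
      define E where "E = 2*p*((1+p)^(i+j0) - 1)"
      have e1: "\<bar>S1 - X1\<bar> \<le> E" unfolding S1_def X1_def E_def
        using less.IH[of "i+j0" i j0] less.prems j j00 by auto
      have e2: "\<bar>S2 - X2\<bar> \<le> E" unfolding S2_def X2_def E_def
        using less.IH[of "i+j0" j0 i] less.prems j j00 by (auto simp: add.commute)
      have loc: "\<bar>X3 - X1 * (1 - p * X2)\<bar> \<le> 2*p^2" unfolding X1_def X2_def X3_def j
        using X_local[of p i j0] p less.prems j00 False by auto
      have Sj: "S_mf p i j = S1 * (1 - p*S2)" unfolding S1_def S2_def j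
        using S_step j00 False by blast
      have bS2: "0 \<le> S2" "S2 \<le> 1" using S_bounds p unfolding S2_def by auto
      have bX1: "0 \<le> X1" "X1 \<le> 1" using XX_bounds p unfolding X1_def by auto
      have f1: "0 \<le> 1 - p*S2" "1 - p*S2 \<le> 1" using bS2 p by (auto simp: mult_le_one)
      have dec: "S1 * (1 - p*S2) - X3 = (S1-X1)*(1-p*S2) + p*X1*(X2-S2) - (X3 - X1*(1-p*X2))"
        by (simp add: algebra_simps)
      have t1: "\<bar>(S1-X1)*(1-p*S2)\<bar> \<le> E" using e1 f1
      proof -
        have "\<bar>(S1-X1)*(1-p*S2)\<bar> = \<bar>S1-X1\<bar>*(1-p*S2)" using f1 by (simp add: abs_mult)
        also have "\<dots> \<le> \<bar>S1-X1\<bar>*1" using f1 by (intro mult_left_mono) auto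
        finally show ?thesis using e1 by simp
      qed
      have t2: "\<bar>p*X1*(X2-S2)\<bar> \<le> p*E"
      proof -
        have "\<bar>p*X1*(X2-S2)\<bar> = p*(X1*\<bar>S2-X2\<bar>)" using p bX1 by (simp add: abs_mult abs_minus_commute)
        also have "\<dots> \<le> p*(1*E)" using p bX1 e2 by (intro mult_left_mono mult_mono) auto
        finally show ?thesis by simp
      qed
      have "\<bar>S_mf p i j - X3\<bar> \<le> E + p*E + 2*p^2" unfolding Sj dec using t1 t2 loc
        unfolding abs_le_iff by linarith
      also have "E + p*E + 2*p^2 = 2*p*((1+p)^(i+j) - 1)" unfolding E_def j
        by (simp add: algebra_simps power2_eq_square)
      finally show ?thesis unfolding X3_def .
    qed
  qed
qed

lemma err:
  fixes p :: real
  assumes "0 \<le> p" "p \<le> 1" "i \<ge> 1" "j \<ge> 1"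
  shows "\<bar>S_mf p i j - XX p i j\<bar> \<le> 2*p*((1+p)^(i+j) - 1)"
  using err_aux assms by blast



lemma pow_le_exp: "0 \<le> (p::real) \<Longrightarrow> (1+p)^n \<le> exp (real n * p)"
proof -
  assume p: "0 \<le> p"
  have "(1+p)^n \<le> (exp p)^n" using p by (intro power_mono) (auto simp: add.commute)
  also have "\<dots> = exp (real n * p)" by (simp add: exp_of_nat_mult)
  finally show ?thesis .
qed

lemma pow_ge_exp: "0 \<le> (p::real) \<Longrightarrow> p \<le> 1 \<Longrightarrow> exp (real n * (p - p^2)) \<le> (1+p)^n"
proof -
  assume p: "0 \<le> p" "p \<le> 1"
  have "p - p^2 \<le> ln (1+p)" using ln_one_plus_pos_lower_bound p by simp
  then have "exp (real n * (p - p^2)) \<le> exp (real n * ln (1+p))"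
    by (intro exp_mono mult_left_mono) auto
  also have "\<dots> = (exp (ln (1+p)))^n" by (simp add: exp_of_nat_mult)
  also have "\<dots> = (1+p)^n" using p by simp
  finally show ?thesis .
qed

lemma exp_sub_one_le: "0 \<le> (x::real) \<Longrightarrow> exp x - 1 \<le> x * exp x"
proof -
  assume x: "0 \<le> x"
  have "1 - x \<le> exp (-x)" by (rule exp_minus_ge)
  then have "(1 - x) * exp x \<le> exp (-x) * exp x" by (intro mult_right_mono) auto
  also have "\<dots> = 1" by (simp add: exp_minus field_simps)
  finally show ?thesis by (simp add: algebra_simps)
qed

lemma approx:
  fixes d \<gamma> :: real and N t :: nat
  assumes d: "d > 0" and N: "real N > d" and t: "t \<le> N" "real t \<le> real N * \<gamma>" "real N * \<gamma> < real t + 2"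
  shows "\<bar>(1 + d/real N)^t - exp (d*\<gamma>)\<bar> \<le> (d/real N) * (exp d * (2*exp 2 + d))"
proof -
  define p where "p = d / real N"
  have Npos: "real N > 0" using N d by linarith
  have p0: "0 \<le> p" "p \<le> 1" using d N Npos unfolding p_def by auto
  have Np: "real N * p = d" unfolding p_def using Npos by simp
  have tp: "real t * p \<le> d" using t(1) p0 Np by (metis mult_right_mono of_nat_le_iff)
  have dg: "d*\<gamma> = p * (real N * \<gamma>)" using Np by (simp add: algebra_simps)
  have up: "(1+p)^t \<le> exp (d*\<gamma>)"
  proof -
    have "(1+p)^t \<le> exp (real t * p)" using pow_le_exp p0 by blast
    also have "\<dots> \<le> exp (d*\<gamma>)" unfolding dg using t(2) p0 by (simp add: mult.commute mult_left_mono)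
    finally show ?thesis .
  qed
  have lo1: "exp (d*\<gamma>) \<le> exp (real t * p) * exp (2*p)"
  proof -
    have "d*\<gamma> \<le> p * (real t + 2)" unfolding dg using t(3) p0 by (intro mult_left_mono) auto
    then show ?thesis by (simp add: exp_add[symmetric] algebra_simps)
  qed
  have lo2: "exp (real t * p) * exp (- (d*p)) \<le> (1+p)^t"
  proof -
    have "real t * p^2 \<le> d * p" using tp p0 by (simp add: power2_eq_square mult.assoc[symmetric] mult_right_mono)
    then have "real t * p - d*p \<le> real t * (p - p^2)" by (simp add: algebra_simps)
    then have "exp (real t * p - d*p) \<le> exp (real t * (p - p^2))" by simp
    also have "\<dots> \<le> (1+p)^t" using pow_ge_exp p0 by blast
    finally show ?thesis by (simp add: exp_diff exp_minus field_simps)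
  qed
  have e1: "exp (2*p) - 1 \<le> 2*p*exp 2"
  proof -
    have "exp (2*p) - 1 \<le> 2*p*exp(2*p)" using exp_sub_one_le[of "2*p"] p0 by simp
    also have "\<dots> \<le> 2*p*exp 2" using p0 by (intro mult_left_mono) auto
    finally show ?thesis .
  qed
  have e2: "1 - exp (- (d*p)) \<le> d*p" using exp_minus_ge[of "d*p"] by simp
  have et: "exp (real t * p) \<le> exp d" using tp by simp
  have "0 \<le> d*p" using p0 d by simp
  then have "- (d*p) \<le> 2*p" using p0 by linarith
  then have diffnn: "0 \<le> exp (2*p) - exp (- (d*p))" by (simp only: diff_ge_0_iff_ge exp_le_cancel_iff)
  have "exp (d*\<gamma>) - (1+p)^t \<le> exp (real t * p) * (exp (2*p) - exp (- (d*p)))"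
    using lo1 lo2 by (simp add: algebra_simps)
  also have "\<dots> \<le> exp d * (exp (2*p) - exp (- (d*p)))" using et diffnn by (intro mult_right_mono) auto
  also have "\<dots> \<le> exp d * (2*p*exp 2 + d*p)" using e1 e2 by (intro mult_left_mono) auto
  also have "\<dots> = p * (exp d * (2*exp 2 + d))" by (simp add: algebra_simps)
  finally have "exp (d*\<gamma>) - (1+p)^t \<le> p * (exp d * (2*exp 2 + d))" .
  moreover have "0 \<le> p * (exp d * (2*exp 2 + d))" using p0 d by simp
  ultimately show ?thesis using up unfolding p_def[symmetric] by (simp add: abs_le_iff)
qed

lemma abs_div_ge1: "1 \<le> (y::real) \<Longrightarrow> \<bar>x/y\<bar> \<le> \<bar>x\<bar>"
proof -
  assume y: "1 \<le> y"
  have "\<bar>x/y\<bar> = \<bar>x\<bar>/y" using y by (simp add: abs_divide)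
  also have "\<dots> \<le> \<bar>x\<bar>/1" using y by (intro divide_left_mono) auto
  finally show ?thesis by simp
qed

lemma abs_mult_le1:
  fixes u v r :: real
  assumes u: "0 \<le> u" "u \<le> 1" and v: "abs v \<le> r"
  shows "abs (u * v) \<le> r"
proof -
  have "\<bar>u * v\<bar> = u * \<bar>v\<bar>" using u by (simp add: abs_mult)
  also have "\<dots> \<le> 1 * \<bar>v\<bar>" using u by (intro mult_right_mono) auto
  finally show ?thesis using v by simp
qed

lemma hh_lip1:
  assumes "a \<ge> 1" "c \<ge> 1" "c' \<ge> 1"
  shows "\<bar>hh a c - hh a c'\<bar> \<le> \<bar>c - c'\<bar>"
proof -
  have pos: "a+c-1 > 0" "a+c'-1 > 0" "a+c'-1 \<ge> 1" using assms by auto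
  have eq: "hh a c - hh a c' = (a/(a+c-1)) * ((c'-c)/(a+c'-1))"
    unfolding hh_def using pos by (simp add: field_simps)
  have "\<bar>(c'-c)/(a+c'-1)\<bar> \<le> \<bar>c - c'\<bar>" using abs_div_ge1[OF pos(3), of "c'-c"] by (simp add: abs_minus_commute)
  moreover have "0 \<le> a/(a+c-1)" "a/(a+c-1) \<le> 1" using pos assms by auto
  ultimately show ?thesis unfolding eq by (intro abs_mult_le1)
qed

lemma hh_lip2:
  assumes "a \<ge> 1" "a' \<ge> 1" "c \<ge> 1"
  shows "\<bar>hh a c - hh a' c\<bar> \<le> \<bar>a - a'\<bar>"
proof -
  have pos: "a+c-1 > 0" "a'+c-1 > 0" "a'+c-1 \<ge> 1" using assms by auto
  have eq: "hh a c - hh a' c = ((c-1)/(a+c-1)) * ((a-a')/(a'+c-1))"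
    unfolding hh_def using pos by (simp add: field_simps)
  have "\<bar>(a-a')/(a'+c-1)\<bar> \<le> \<bar>a - a'\<bar>" using abs_div_ge1[OF pos(3)] by simp
  moreover have "0 \<le> (c-1)/(a+c-1)" "(c-1)/(a+c-1) \<le> 1" using pos assms by auto
  ultimately show ?thesis unfolding eq by (intro abs_mult_le1)
qed

lemma hh_lip:
  assumes "a \<ge> 1" "a' \<ge> 1" "c \<ge> 1" "c' \<ge> 1"
  shows "\<bar>hh a c - hh a' c'\<bar> \<le> \<bar>a - a'\<bar> + \<bar>c - c'\<bar>"
  using hh_lip1[of a c c'] hh_lip2[of a a' c'] assms by (simp add: abs_le_iff)

lemma Dinf_eq:
  assumes "d > 0" "\<alpha> \<ge> 0" "\<beta> \<ge> 0"
  shows "Dinf d \<alpha> \<beta> = d * (hh (exp (d*\<alpha>)) (exp (d*\<beta>)) * hh (exp (d*\<beta>)) (exp (d*\<alpha>)))"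
proof -
  define a where "a = exp (d*\<alpha>)"
  define b where "b = exp (d*\<beta>)"
  have ab: "a \<ge> 1" "b \<ge> 1" unfolding a_def b_def using assms by auto
  have R: "d * (hh a b * hh b a) = d*a*b/(a+b-1)^2" unfolding hh_def using ab
    by (simp add: field_simps power2_eq_square)
  show ?thesis
  proof (cases "\<alpha> \<le> \<beta>")
    case True
    have "Dinf d \<alpha> \<beta> = d * (b/a) / (1 - 1/a + b/a)^2"
      unfolding Dinf_def a_def b_def using True
      by (simp add: exp_diff exp_minus right_diff_distrib field_simps)
    also have "\<dots> = d*a*b/(a+b-1)^2" using ab
      by (simp add: field_simps power2_eq_square)
    finally show ?thesis using R unfolding a_def b_def by simp
  next
    case False
    have "Dinf d \<alpha> \<beta> = d * (a/b) / (1 - 1/b + a/b)^2"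
      unfolding Dinf_def a_def b_def using False
      by (simp add: exp_diff exp_minus right_diff_distrib field_simps)
    also have "\<dots> = d*a*b/(a+b-1)^2" using ab
      by (simp add: field_simps power2_eq_square)
    finally show ?thesis using R unfolding a_def b_def by simp
  qed
qed



lemma idx_props:
  assumes "real N > 0" "0 \<le> \<alpha>" "\<alpha> < 1"
  shows "idxN N \<alpha> \<ge> 1" "idxN N \<alpha> \<le> N" "real (idxN N \<alpha> - 1) \<le> real N * \<alpha>"
    "real N * \<alpha> < real (idxN N \<alpha> - 1) + 1"
proof -
  define f where "f = \<lfloor>real N * \<alpha>\<rfloor>"
  have f0: "f \<ge> 0" unfolding f_def using assms by simp
  have fN: "real N * \<alpha> < real N" using assms by simp
  then have "f < int N" unfolding f_def by (simp add: floor_less_iff)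
  have e: "idxN N \<alpha> - 1 = nat f" unfolding idxN_def f_def by simp
  have r: "real (nat f) = real_of_int f" using f0 by simp
  show "idxN N \<alpha> \<ge> 1" unfolding idxN_def by simp
  show "idxN N \<alpha> \<le> N" unfolding idxN_def f_def[symmetric] using \<open>f < int N\<close> f0 by (simp add: nat_less_iff)
  have rf: "real (idxN N \<alpha> - 1) = real_of_int f" using e r by simp
  show "real (idxN N \<alpha> - 1) \<le> real N * \<alpha>" unfolding rf f_def by (rule of_int_floor_le)
  show "real N * \<alpha> < real (idxN N \<alpha> - 1) + 1" unfolding rf f_def by (rule real_of_int_floor_add_one_gt)
qed

lemma S_close:
  fixes d :: real and N i j :: nat
  assumes d: "d > 0" and N: "real N > d"
    and i: "i \<ge> 1" "i \<le> N" "real (i - 1) \<le> real N * \<alpha>" "real N * \<alpha> < real (i - 1) + 1"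
    and j: "j \<ge> 1" "j \<le> N" "real (j - 1) \<le> real N * \<beta>" "real N * \<beta> < real (j - 1) + 1"
    and ab: "\<alpha> \<ge> 0" "\<beta> \<ge> 0"
  shows "\<bar>S_mf (d/real N) i j - hh (exp (d*\<alpha>)) (exp (d*\<beta>))\<bar>
     \<le> 2*(d/real N)*exp (2*d) + 2*((d/real N) * (exp d * (2*exp 2 + d)))"
proof -
  define p where "p = d / real N"
  define C where "C = exp d * (2*exp 2 + d)"
  have Npos: "real N > 0" using N d by linarith
  have p0: "0 \<le> p" "p \<le> 1" using d N Npos unfolding p_def by auto
  have Np: "real N * p = d" unfolding p_def using Npos by simp
  have q1: "\<And>k. (1+p)^k \<ge> 1" using p0 by (auto intro: one_le_power)
  have e1: "\<bar>S_mf p i j - XX p i j\<bar> \<le> 2*p*exp (2*d)"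
  proof -
    have "\<bar>S_mf p i j - XX p i j\<bar> \<le> 2*p*((1+p)^(i+j) - 1)" using err p0 i j by blast
    also have "\<dots> \<le> 2*p*(1+p)^(2*N)"
    proof -
      have "(1+p)^(i+j) \<le> (1+p)^(2*N)" using i j p0 by (intro power_increasing) auto
      then show ?thesis using p0 by (intro mult_left_mono) auto
    qed
    also have "\<dots> \<le> 2*p*exp (real (2*N) * p)" using pow_le_exp[OF p0(1), of "2*N"] p0 by (intro mult_left_mono) auto
    also have "real (2*N) * p = 2*d" using Np by simp
    finally show ?thesis .
  qed
  have a1: "\<bar>(1+p)^(i-1) - exp (d*\<alpha>)\<bar> \<le> p*C"
  proof -
    have t: "i - 1 \<le> N" "real (i - 1) \<le> real N * \<alpha>" "real N * \<alpha> < real (i - 1) + 2" using i by auto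
    show ?thesis unfolding p_def C_def by (rule approx[OF d N t])
  qed
  have a2: "\<bar>(1+p)^(ex i j) - exp (d*\<beta>)\<bar> \<le> p*C"
  proof (cases "j \<le> i")
    case True
    then have "ex i j = j - 1" by (simp add: ex_def)
    have t: "j - 1 \<le> N" "real (j - 1) \<le> real N * \<beta>" "real N * \<beta> < real (j - 1) + 2"
      using j(2) apply simp using j(3) apply simp using j(4) by linarith
    show ?thesis unfolding p_def C_def \<open>ex i j = j - 1\<close> by (rule approx[OF d N t])
  next
    case False
    then have x: "ex i j = j - 2" by (simp add: ex_def)
    have "j - 1 = Suc (j - 2)" using False i by arith
    then have jj: "real (j-1) = real (j-2) + 1" by simp
    have t: "j - 2 \<le> N" "real (j - 2) \<le> real N * \<beta>" "real N * \<beta> < real (j - 2) + 2"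
      using j(2) apply simp using j(3) jj apply linarith using j(4) jj by linarith
    show ?thesis unfolding p_def C_def x by (rule approx[OF d N t])
  qed
  have ge: "exp (d*\<alpha>) \<ge> 1" "exp (d*\<beta>) \<ge> 1" using d ab by auto
  have "\<bar>XX p i j - hh (exp (d*\<alpha>)) (exp (d*\<beta>))\<bar> \<le> p*C + p*C"
    unfolding XX_def using hh_lip[OF q1 ge(1) q1 ge(2), of "i-1" "ex i j"] a1 a2 by linarith
  then show ?thesis using e1 unfolding p_def[symmetric] C_def[symmetric] by linarith
qed



lemma Dscaled_eq:
  assumes N: "real N > 0" and ab: "\<alpha> \<ge> 0" "\<beta> \<ge> 0"
  shows "Dscaled d N \<alpha> \<beta> = d * (S_mf (d/real N) (idxN N \<alpha>) (idxN N \<beta>) * S_mf (d/real N) (idxN N \<beta>) (idxN N \<alpha>))"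
proof (cases "\<lfloor>real N * \<alpha>\<rfloor> = \<lfloor>real N * \<beta>\<rfloor>")
  case True
  then have e: "idxN N \<alpha> = idxN N \<beta>" unfolding idxN_def by simp
  have "Dscaled d N \<alpha> \<beta> = real N * (d/real N) * (S_mf (d/real N) (idxN N \<alpha>) (idxN N \<alpha>))^2"
    unfolding Dscaled_def Let_def using True by simp
  also have "real N * (d/real N) = d" using N by simp
  finally show ?thesis unfolding e by (simp add: power2_eq_square)
next
  case False
  have f: "\<lfloor>real N * \<alpha>\<rfloor> \<ge> 0" "\<lfloor>real N * \<beta>\<rfloor> \<ge> 0" using N ab by auto
  have ne: "idxN N \<alpha> \<noteq> idxN N \<beta>" unfolding idxN_def using False f by (simp add: eq_nat_nat_iff)
  have "Dscaled d N \<alpha> \<beta> = real N * D_mf (d/real N) (idxN N \<alpha>) (idxN N \<beta>)"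
    unfolding Dscaled_def Let_def using False by simp
  also have "D_mf (d/real N) (idxN N \<alpha>) (idxN N \<beta>) = (d/real N) * (S_mf (d/real N) (idxN N \<alpha>) (idxN N \<beta>) * S_mf (d/real N) (idxN N \<beta>) (idxN N \<alpha>))"
    using ne by (subst D_mf.simps) simp
  finally show ?thesis using N by simp
qed

lemma prod_close:
  fixes a b c e d :: real
  assumes "0 \<le> b" "b \<le> 1" "0 \<le> c" "c \<le> 1" "d \<ge> 0"
  shows "\<bar>d*(a*b) - d*(c*e)\<bar> \<le> d*(\<bar>a-c\<bar> + \<bar>b-e\<bar>)"
proof -
  have eq: "d*(a*b) - d*(c*e) = d*((a-c)*b + c*(b-e))" by (simp add: algebra_simps)
  have t1: "\<bar>(a-c)*b\<bar> \<le> \<bar>a-c\<bar>"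
    using abs_mult_le1[of b "a-c" "\<bar>a-c\<bar>"] assms by (simp add: mult.commute)
  have t2: "\<bar>c*(b-e)\<bar> \<le> \<bar>b-e\<bar>" using abs_mult_le1[of c "b-e" "\<bar>b-e\<bar>"] assms by simp
  have "\<bar>(a-c)*b + c*(b-e)\<bar> \<le> \<bar>a-c\<bar> + \<bar>b-e\<bar>"
    using abs_triangle_ineq[of "(a-c)*b" "c*(b-e)"] t1 t2 by linarith
  then have "d * \<bar>(a-c)*b + c*(b-e)\<bar> \<le> d*(\<bar>a-c\<bar> + \<bar>b-e\<bar>)" using assms by (intro mult_left_mono) auto
  then show ?thesis unfolding eq using assms by (simp add: abs_mult)
qed



theorem theorem1:
  fixes d :: real
  assumes "d > 0"
  shows "\<forall>\<epsilon>>0. \<exists>M::nat. \<forall>N. N \<ge> M \<and> real N > d \<longrightarrow>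
           (\<forall>\<alpha> \<beta>. 0 \<le> \<alpha> \<and> \<alpha> < 1 \<and> 0 \<le> \<beta> \<and> \<beta> < 1 \<longrightarrow>
              \<bar>Dscaled d N \<alpha> \<beta> - Dinf d \<alpha> \<beta>\<bar> < \<epsilon>)"
proof (intro allI impI)
  fix \<epsilon> :: real assume eps: "\<epsilon> > 0"
  define C where "C = exp d * (2*exp 2 + d)"
  define K where "K = 4*d*(exp (2*d) + C)"
  have K0: "K \<ge> 0" unfolding K_def C_def using assms by simp
  define M where "M = nat \<lceil>d*K/\<epsilon>\<rceil> + 1"
  show "\<exists>M::nat. \<forall>N. N \<ge> M \<and> real N > d \<longrightarrow>
           (\<forall>\<alpha> \<beta>. 0 \<le> \<alpha> \<and> \<alpha> < 1 \<and> 0 \<le> \<beta> \<and> \<beta> < 1 \<longrightarrow>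
              \<bar>Dscaled d N \<alpha> \<beta> - Dinf d \<alpha> \<beta>\<bar> < \<epsilon>)"
  proof (intro exI[of _ M] allI impI)
    fix N :: nat and \<alpha> \<beta> :: real
    assume NM: "M \<le> N \<and> d < real N" and ab: "0 \<le> \<alpha> \<and> \<alpha> < 1 \<and> 0 \<le> \<beta> \<and> \<beta> < 1"
    define p where "p = d / real N"
    have Npos: "real N > 0" using NM assms by linarith
    have p0: "0 \<le> p" "p \<le> 1" using NM Npos assms unfolding p_def by auto
    define i where "i = idxN N \<alpha>"
    define j where "j = idxN N \<beta>"
    have a0: "0 \<le> \<alpha>" "\<alpha> < 1" "0 \<le> \<beta>" "\<beta> < 1" using ab by auto
    have Nd: "real N > d" using NM by simp
    note ip = idx_props[OF Npos a0(1,2), folded i_def]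
    note jp = idx_props[OF Npos a0(3,4), folded j_def]
    have c1: "\<bar>S_mf p i j - hh (exp (d*\<alpha>)) (exp (d*\<beta>))\<bar> \<le> 2*p*exp (2*d) + 2*(p*C)"
      unfolding p_def C_def by (rule S_close[OF assms Nd ip jp a0(1) a0(3)])
    have c2: "\<bar>S_mf p j i - hh (exp (d*\<beta>)) (exp (d*\<alpha>))\<bar> \<le> 2*p*exp (2*d) + 2*(p*C)"
      unfolding p_def C_def by (rule S_close[OF assms Nd jp ip a0(3) a0(1)])
    have Sb: "0 \<le> S_mf p j i" "S_mf p j i \<le> 1" using S_bounds p0 by auto
    have hb: "0 \<le> hh (exp (d*\<alpha>)) (exp (d*\<beta>))" "hh (exp (d*\<alpha>)) (exp (d*\<beta>)) \<le> 1"
      using hh_bounds[of "exp (d*\<alpha>)" "exp (d*\<beta>)"] assms a0 by auto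
    have "\<bar>Dscaled d N \<alpha> \<beta> - Dinf d \<alpha> \<beta>\<bar>
       = \<bar>d * (S_mf p i j * S_mf p j i) - d * (hh (exp (d*\<alpha>)) (exp (d*\<beta>)) * hh (exp (d*\<beta>)) (exp (d*\<alpha>)))\<bar>"
      unfolding Dscaled_eq[OF Npos a0(1) a0(3)]
        Dinf_eq[OF assms a0(1) a0(3)]
        p_def i_def j_def ..
    also have "\<dots> \<le> d * (\<bar>S_mf p i j - hh (exp (d*\<alpha>)) (exp (d*\<beta>))\<bar> + \<bar>S_mf p j i - hh (exp (d*\<beta>)) (exp (d*\<alpha>))\<bar>)"
      by (rule prod_close[OF Sb hb less_imp_le[OF assms]])
    also have "\<dots> \<le> d * ((2*p*exp (2*d) + 2*(p*C)) + (2*p*exp (2*d) + 2*(p*C)))"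
      apply (rule mult_left_mono) using c1 c2 apply linarith using assms by simp
    also have "\<dots> = p * K" unfolding K_def by (simp add: algebra_simps)
    also have "\<dots> < \<epsilon>"
    proof -
      have "d*K/\<epsilon> < real N"
      proof -
        have "d*K/\<epsilon> \<le> real (nat \<lceil>d*K/\<epsilon>\<rceil>)" by linarith
        also have "\<dots> < real M" unfolding M_def by simp
        also have "\<dots> \<le> real N" using NM by simp
        finally show ?thesis .
      qed
      then have "d*K < \<epsilon> * real N" using eps by (simp add: divide_less_eq mult.commute)
      then show ?thesis unfolding p_def using Npos by (simp add: divide_less_eq mult.commute)
    qed
    finally show "\<bar>Dscaled d N \<alpha> \<beta> - Dinf d \<alpha> \<beta>\<bar> < \<epsilon>" .
  qed
qed


end
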